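(* Let $\psi:\mathbb{R}_{\geq 0}\to\mathbb{R}$ be a neighbor function. Then for any $x,y,t$ with $0\leq x<y$ and $t\geq 0$: (1) $\psi^{-1}$ exists and is increasing; (2) $|\psi(y+t)-\psi(x+t)|\leq|\psi(y)-\psi(x)|$; (3) $|I_{\psi,t}(y)|\geq|I_{\psi,t}(x)|$; (4) $\dfrac{|I_{\psi,t}(y)|}{y}\leq\dfrac{|I_{\psi,t}(x)|}{x}$.
   Context: A neighbor function is a function $\psi:\mathbb{R}_{\geq 0}\to\mathbb{R}$ that is (i) strictly increasing, (ii) continuous, (iii) concave, and (iv) such that $g(x)=\psi(e^{x})$ is convex as a function of $x\in\mathbb{R}$. For a neighbor function $\psi$, a number $\sigma\geq 0$ and $y\geq 0$, the uncertainty interval around $y$ is $I_{\psi,\sigma}(y)=[L,U]$ with $L=\psi^{-1}\big(\max(\psi(0),\psi(y)-\sigma)\big)$ and $U=\psi^{-1}\big(\psi(y)+\sigma\big)$; its length is $|I_{\psi,\sigma}(y)|=U-L$. *)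

theory Defs
  imports "HOL-Analysis.Analysis"
begin

text \<open>A neighbor function psi : [0,inf) -> R: strictly increasing, continuous, concave,
  and x |-> psi (exp x) convex on R. Values of psi outside [0,inf) are irrelevant.\<close>
definition neighbor_function :: "(real \<Rightarrow> real) \<Rightarrow> bool" where
  "neighbor_function \<psi> \<longleftrightarrow>
     strict_mono_on {0..} \<psi> \<and> continuous_on {0..} \<psi> \<and> concave_on {0..} \<psi> \<and>
     convex_on UNIV (\<lambda>x. \<psi> (exp x))"

definition psi_inv :: "(real \<Rightarrow> real) \<Rightarrow> real \<Rightarrow> real" where
  "psi_inv \<psi> = the_inv_into {0..} \<psi>"

definition unc_lower :: "(real \<Rightarrow> real) \<Rightarrow> real \<Rightarrow> real \<Rightarrow> real" where
  "unc_lower \<psi> \<sigma> y = psi_inv \<psi> (max (\<psi> 0) (\<psi> y - \<sigma>))"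

definition unc_upper :: "(real \<Rightarrow> real) \<Rightarrow> real \<Rightarrow> real \<Rightarrow> real" where
  "unc_upper \<psi> \<sigma> y = psi_inv \<psi> (\<psi> y + \<sigma>)"

definition unc_interval :: "(real \<Rightarrow> real) \<Rightarrow> real \<Rightarrow> real \<Rightarrow> real set" where
  "unc_interval \<psi> \<sigma> y = {unc_lower \<psi> \<sigma> y .. unc_upper \<psi> \<sigma> y}"

definition unc_length :: "(real \<Rightarrow> real) \<Rightarrow> real \<Rightarrow> real \<Rightarrow> real" where
  "unc_length \<psi> \<sigma> y = unc_upper \<psi> \<sigma> y - unc_lower \<psi> \<sigma> y"

end

theory Submission
  imports Defs
begin

lemma convex_incr:
  fixes f :: "real \<Rightarrow> real"
  assumes cf: "convex_on I f" and aI: "a \<in> I" and bI: "b + d \<in> I"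
    and ab: "a \<le> b" and d: "0 \<le> d"
  shows "f (a + d) + f b \<le> f a + f (b + d)"
proof (cases "b - a + d = 0")
  case True
  then have "a = b" "d = 0" using ab d by auto
  then show ?thesis by simp
next
  case False
  then have pos: "b - a + d > 0" using ab d by auto
  define l where "l = d / (b - a + d)"
  have l0: "0 \<le> l" "l \<le> 1" using pos ab d by (auto simp: l_def field_simps)
  have ld: "l * (b - a + d) = d" using pos by (simp add: l_def)
  have e1: "(1 - l) *\<^sub>R a + l *\<^sub>R (b + d) = a + d"
    using ld by (simp add: algebra_simps)
  have e2: "l *\<^sub>R a + (1 - l) *\<^sub>R (b + d) = b"
    using ld by (simp add: algebra_simps)
  have h1: "f (a + d) \<le> (1 - l) * f a + l * f (b + d)"
    using convex_onD[OF cf l0 aI bI] e1 by simp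
  have l1: "0 \<le> 1 - l" "1 - l \<le> 1" using l0 by auto
  have h2: "f b \<le> (1 - (1 - l)) * f a + (1 - l) * f (b + d)"
    using convex_onD[OF cf l1 aI bI] e2 by simp
  show ?thesis using h1 h2 by (simp add: algebra_simps)
qed

context
  fixes \<psi> :: "real \<Rightarrow> real"
  assumes nf: "neighbor_function \<psi>"
begin

lemma sm: "strict_mono_on {0..} \<psi>" using nf by (simp add: neighbor_function_def)
lemma ct: "continuous_on {0..} \<psi>" using nf by (simp add: neighbor_function_def)
lemma cc: "convex_on {0..} (\<lambda>x. - \<psi> x)" using nf by (simp add: neighbor_function_def concave_on_def)
lemma cg: "convex_on UNIV (\<lambda>x. \<psi> (exp x))" using nf by (simp add: neighbor_function_def)

lemma lt_iff: "0 \<le> a \<Longrightarrow> 0 \<le> b \<Longrightarrow> \<psi> a < \<psi> b \<longleftrightarrow> a < b"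
  using strict_mono_on_less[OF sm] by auto

lemma le_iff: "0 \<le> a \<Longrightarrow> 0 \<le> b \<Longrightarrow> \<psi> a \<le> \<psi> b \<longleftrightarrow> a \<le> b"
  using lt_iff by (meson linorder_not_le)

lemma unbounded: "\<exists>z\<ge>0. \<psi> z \<ge> c"
proof -
  define g where "g = (\<lambda>x. \<psi> (exp x))"
  have g01: "g 0 < g 1" unfolding g_def by (subst lt_iff) auto
  obtain n :: nat where n: "real n * (g 1 - g 0) \<ge> c - g 0" "n \<ge> 1"
  proof -
    obtain m :: nat where "real m > (c - g 0) / (g 1 - g 0)" using reals_Archimedean2 by blast
    then have "real (m+1) * (g 1 - g 0) \<ge> c - g 0" using g01
    proof -
      have "real m * (g 1 - g 0) > c - g 0" using \<open>real m > _\<close> g01 by (simp add: field_simps)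
      then show ?thesis using g01 by (simp add: algebra_simps)
    qed
    then show ?thesis using that[of "m+1"] by auto
  qed
  have t: "0 \<le> 1 / real n" "1 / real n \<le> 1" using n by auto
  have "g ((1 - 1/real n) *\<^sub>R 0 + (1/real n) *\<^sub>R real n) \<le> (1 - 1/real n) * g 0 + (1/real n) * g (real n)"
    using convex_onD[OF cg[folded g_def] t, of 0 "real n"] by auto
  then have "g 1 \<le> (1 - 1/real n) * g 0 + (1/real n) * g (real n)" using n by simp
  then have "real n * g 1 \<le> (real n - 1) * g 0 + g (real n)" using n
    by (simp add: field_simps)
  then have "g (real n) \<ge> c" using n by (simp add: algebra_simps)
  then show ?thesis unfolding g_def by (intro exI[of _ "exp (real n)"]) auto
qed

lemma image: "\<psi> ` {0..} = {\<psi> 0..}"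
proof
  show "\<psi> ` {0..} \<subseteq> {\<psi> 0..}" using le_iff by auto
  show "{\<psi> 0..} \<subseteq> \<psi> ` {0..}"
  proof
    fix c assume "c \<in> {\<psi> 0..}"
    then have c: "\<psi> 0 \<le> c" by simp
    obtain z where z: "z \<ge> 0" "\<psi> z \<ge> c" using unbounded by blast
    have "continuous_on {0..z} \<psi>" using ct by (rule continuous_on_subset) auto
    then obtain w where "0 \<le> w" "w \<le> z" "\<psi> w = c" using IVT'[of \<psi> 0 c z] c z by auto
    then show "c \<in> \<psi> ` {0..}" by force
  qed
qed

lemma bij: "bij_betw \<psi> {0..} {\<psi> 0..}"
  unfolding bij_betw_def using image strict_mono_on_imp_inj_on[OF sm] by auto

lemma inv: "\<psi> 0 \<le> c \<Longrightarrow> psi_inv \<psi> c \<ge> 0 \<and> \<psi> (psi_inv \<psi> c) = c"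
proof -
  assume c: "\<psi> 0 \<le> c"
  have inj: "inj_on \<psi> {0..}" using bij bij_betw_def by blast
  have "c \<in> \<psi> ` {0..}" using image c by auto
  then show ?thesis unfolding psi_inv_def
    using the_inv_into_into[OF inj, of c "{0..}"] f_the_inv_into_f[OF inj] by auto
qed

lemma inv_le: "\<psi> 0 \<le> c \<Longrightarrow> c \<le> c' \<Longrightarrow> psi_inv \<psi> c \<le> psi_inv \<psi> c'"
  using inv[of c] inv[of c'] le_iff by (metis order_trans)

lemma inv_lt: "\<psi> 0 \<le> c \<Longrightarrow> c < c' \<Longrightarrow> psi_inv \<psi> c < psi_inv \<psi> c'"
  using inv[of c] inv[of c'] lt_iff by (metis order_less_imp_le order_trans)

lemma ge_inv: "z \<ge> 0 \<Longrightarrow> \<psi> 0 \<le> c \<Longrightarrow> \<psi> z \<ge> c \<Longrightarrow> z \<ge> psi_inv \<psi> c"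
  using inv[of c] le_iff by metis

lemma le_inv: "z \<ge> 0 \<Longrightarrow> \<psi> 0 \<le> c \<Longrightarrow> \<psi> z \<le> c \<Longrightarrow> z \<le> psi_inv \<psi> c"
  using inv[of c] le_iff by metis

lemma mult_incr:
  assumes "0 < a" "a \<le> b" "1 \<le> lam"
  shows "\<psi> (lam * a) - \<psi> a \<le> \<psi> (lam * b) - \<psi> b"
proof -
  have "\<psi> (exp (ln a + ln lam)) + \<psi> (exp (ln b)) \<le> \<psi> (exp (ln a)) + \<psi> (exp (ln b + ln lam))"
    using convex_incr[OF cg, of "ln a" "ln b" "ln lam"] assms by auto
  then show ?thesis using assms by (simp add: exp_add mult.commute)
qed

end

theorem theorem5p3:
  fixes \<psi> :: "real \<Rightarrow> real" and x y t :: real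
  assumes "neighbor_function \<psi>"
    and "0 \<le> x" and "x < y" and "0 \<le> t"
  shows "(bij_betw \<psi> {0..} {\<psi> 0..} \<and> strict_mono_on {\<psi> 0..} (psi_inv \<psi>))
    \<and> \<bar>\<psi> (y + t) - \<psi> (x + t)\<bar> \<le> \<bar>\<psi> y - \<psi> x\<bar>
    \<and> unc_length \<psi> t y \<ge> unc_length \<psi> t x
    \<and> (0 < x \<longrightarrow> unc_length \<psi> t y / y \<le> unc_length \<psi> t x / x)"
proof -
  note nf = assms(1)
  have p0x: "\<psi> 0 \<le> \<psi> x" and pxy: "\<psi> x < \<psi> y" using le_iff[OF nf] lt_iff[OF nf] assms by auto
  have P1: "bij_betw \<psi> {0..} {\<psi> 0..} \<and> strict_mono_on {\<psi> 0..} (psi_inv \<psi>)"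
    using bij[OF nf] inv_lt[OF nf] by (auto intro!: strict_mono_onI)
  have P2: "\<bar>\<psi> (y + t) - \<psi> (x + t)\<bar> \<le> \<bar>\<psi> y - \<psi> x\<bar>"
  proof -
    have "- \<psi> (x + t) + - \<psi> y \<le> - \<psi> x + - \<psi> (y + t)"
      using convex_incr[OF cc[OF nf], of x y t] assms by auto
    moreover have "\<psi> (x + t) < \<psi> (y + t)" using lt_iff[OF nf] assms by auto
    ultimately show ?thesis using pxy by auto
  qed
  define Lx where "Lx = unc_lower \<psi> t x"
  define Ly where "Ly = unc_lower \<psi> t y"
  define Ux where "Ux = unc_upper \<psi> t x"
  define Uy where "Uy = unc_upper \<psi> t y"
  have iLx: "Lx \<ge> 0" "\<psi> Lx = max (\<psi> 0) (\<psi> x - t)"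
    using inv[OF nf, of "max (\<psi> 0) (\<psi> x - t)"] unfolding Lx_def unc_lower_def by auto
  have iLy: "Ly \<ge> 0" "\<psi> Ly = max (\<psi> 0) (\<psi> y - t)"
    using inv[OF nf, of "max (\<psi> 0) (\<psi> y - t)"] unfolding Ly_def unc_lower_def by auto
  have iUx: "Ux \<ge> 0" "\<psi> Ux = \<psi> x + t"
    using inv[OF nf, of "\<psi> x + t"] p0x assms unfolding Ux_def unc_upper_def by auto
  have iUy: "Uy \<ge> 0" "\<psi> Uy = \<psi> y + t"
    using inv[OF nf, of "\<psi> y + t"] p0x pxy assms unfolding Uy_def unc_upper_def by auto
  have LUx: "Lx \<le> Ux" unfolding Lx_def Ux_def unc_lower_def unc_upper_def
    using p0x assms by (intro inv_le[OF nf]) auto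
  have LL: "Lx \<le> Ly" unfolding Lx_def Ly_def unc_lower_def
    using p0x pxy by (intro inv_le[OF nf]) auto
  have P3: "unc_length \<psi> t y \<ge> unc_length \<psi> t x"
  proof -
    define D where "D = Ly - Lx"
    have "- \<psi> (Lx + D) + - \<psi> Ux \<le> - \<psi> Lx + - \<psi> (Ux + D)"
      using convex_incr[OF cc[OF nf], of Lx Ux D] LUx LL iLx iUx by (auto simp: D_def)
    then have "\<psi> (Ux + D) \<le> \<psi> Ux + \<psi> Ly - \<psi> Lx" by (simp add: D_def)
    also have "\<dots> \<le> \<psi> Uy" using iLx iLy iUx iUy pxy by auto
    finally have "\<psi> (Ux + D) \<le> \<psi> Uy" .
    then have "Ux + D \<le> Uy" using le_iff[OF nf, of "Ux + D" Uy] iUx iUy LL D_def by auto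
    then show ?thesis unfolding unc_length_def Lx_def Ly_def Ux_def Uy_def D_def by simp
  qed
  have P4: "0 < x \<longrightarrow> unc_length \<psi> t y / y \<le> unc_length \<psi> t x / x"
  proof
    assume x0: "0 < x"
    then have y0: "0 < y" using assms by auto
    have xU: "x \<le> Ux" unfolding Ux_def unc_upper_def
      using assms p0x by (intro le_inv[OF nf]) auto
    define lam where "lam = Ux / x"
    have lam1: "1 \<le> lam" using xU x0 by (simp add: lam_def)
    have "\<psi> (lam * x) - \<psi> x \<le> \<psi> (lam * y) - \<psi> y"
      using mult_incr[OF nf x0 _ lam1, of y] assms by auto
    moreover have "lam * x = Ux" using x0 by (simp add: lam_def)
    ultimately have "\<psi> (lam * y) \<ge> \<psi> y + t" using iUx by auto
    then have "lam * y \<ge> Uy" unfolding Uy_def unc_upper_def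
      using lam1 y0 p0x pxy assms by (intro ge_inv[OF nf]) auto
    then have U: "Uy / y \<le> Ux / x" using y0 x0 by (simp add: lam_def field_simps)
    have L: "Lx / x \<le> Ly / y"
    proof (cases "Lx = 0")
      case True
      then show ?thesis using iLy y0 by simp
    next
      case False
      then have Lx0: "Lx > 0" using iLx by auto
      then have "\<psi> Lx > \<psi> 0" using lt_iff[OF nf] by auto
      then have eqL: "\<psi> Lx = \<psi> x - t" using iLx by auto
      have Lxx: "Lx \<le> x" unfolding Lx_def unc_lower_def
        using assms p0x by (intro ge_inv[OF nf]) auto
      define b where "b = y * Lx / x"
      have b1: "Lx \<le> b" using Lx0 x0 assms by (simp add: b_def field_simps)
      have lam2: "1 \<le> x / Lx" using Lxx Lx0 by simp
      have "\<psi> (x / Lx * Lx) - \<psi> Lx \<le> \<psi> (x / Lx * b) - \<psi> b"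
        using mult_incr[OF nf Lx0 b1 lam2] .
      moreover have "x / Lx * Lx = x" "x / Lx * b = y" using Lx0 x0 by (auto simp: b_def)
      ultimately have "\<psi> b \<le> max (\<psi> 0) (\<psi> y - t)" using eqL by auto
      then have "b \<le> Ly" unfolding Ly_def unc_lower_def
        using b1 Lx0 by (intro le_inv[OF nf]) auto
      then show ?thesis using x0 y0 by (simp add: b_def field_simps)
    qed
    show "unc_length \<psi> t y / y \<le> unc_length \<psi> t x / x"
      using U L unfolding unc_length_def Lx_def Ly_def Ux_def Uy_def
      by (simp add: diff_divide_distrib)
  qed
  show ?thesis using P1 P2 P3 P4 by blast
qed

end
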